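(* Let $R$ be a commutative ring, $n$ a positive integer and $J$ a weakly $n$-absorbing ideal of $R$. (1) If $I$ is an ideal of $R$ with $I\subseteq J$, then $J/I$ is a weakly $n$-absorbing ideal of $R/I$. (2) If $T$ is a subring of $R$, then $J\cap T$ is a weakly $n$-absorbing ideal of $T$. (3) If $S$ is a multiplicatively closed subset of $R$ with $J\cap S=\emptyset$, then $J_S$ is a weakly $n$-absorbing ideal of $R_S$.
   Context: All rings are commutative with $1\neq0$ (subrings share the identity). A proper ideal $J$ of $R$ is weakly $n$-absorbing if whenever $0\neq a_1\cdots a_{n+1}\in J$ with $a_1,\dots,a_{n+1}\in R$, there are $n$ of the $a_i$'s whose product is in $J$. $R_S$ and $J_S$ denote localizations at $S$. *)

theory Defs
  imports "HOL-Algebra.QuotRing" "HOL-Algebra.Subrings"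
begin

definition weakly_n_absorbing :: "('a, 'b) ring_scheme \<Rightarrow> nat \<Rightarrow> 'a set \<Rightarrow> bool" where
  "weakly_n_absorbing R n J \<longleftrightarrow>
     ideal J R \<and> J \<noteq> carrier R \<and>
     (\<forall>a \<in> {..n} \<rightarrow> carrier R.
        finprod R a {..n} \<noteq> \<zero>\<^bsub>R\<^esub> \<and> finprod R a {..n} \<in> J \<longrightarrow>
        (\<exists>i \<le> n. finprod R a ({..n} - {i}) \<in> J))"

definition mult_closed :: "('a, 'b) ring_scheme \<Rightarrow> 'a set \<Rightarrow> bool" where
  "mult_closed R S \<longleftrightarrow> S \<subseteq> carrier R \<and> \<one>\<^bsub>R\<^esub> \<in> S \<and>
     (\<forall>a \<in> S. \<forall>b \<in> S. a \<otimes>\<^bsub>R\<^esub> b \<in> S)"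

text \<open>Localization R_S as fractions r/s, (r,s) ~ (r',s') iff t(rs' - r's) = 0 for some t in S.\<close>
definition loc_rel :: "('a, 'b) ring_scheme \<Rightarrow> 'a set \<Rightarrow> (('a \<times> 'a) \<times> ('a \<times> 'a)) set" where
  "loc_rel R S = {((r, s), (r', s')). r \<in> carrier R \<and> r' \<in> carrier R \<and> s \<in> S \<and> s' \<in> S \<and>
     (\<exists>t \<in> S. t \<otimes>\<^bsub>R\<^esub> (r \<otimes>\<^bsub>R\<^esub> s' \<ominus>\<^bsub>R\<^esub> r' \<otimes>\<^bsub>R\<^esub> s) = \<zero>\<^bsub>R\<^esub>)}"

definition frac :: "('a, 'b) ring_scheme \<Rightarrow> 'a set \<Rightarrow> 'a \<Rightarrow> 'a \<Rightarrow> ('a \<times> 'a) set" where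
  "frac R S r s = loc_rel R S `` {(r, s)}"

definition loc_mult :: "('a, 'b) ring_scheme \<Rightarrow> 'a set \<Rightarrow> ('a \<times> 'a) set \<Rightarrow> ('a \<times> 'a) set \<Rightarrow> ('a \<times> 'a) set" where
  "loc_mult R S A B = {z. \<exists>p \<in> A. \<exists>q \<in> B. z \<in>
      frac R S (fst p \<otimes>\<^bsub>R\<^esub> fst q) (snd p \<otimes>\<^bsub>R\<^esub> snd q)}"

definition loc_add :: "('a, 'b) ring_scheme \<Rightarrow> 'a set \<Rightarrow> ('a \<times> 'a) set \<Rightarrow> ('a \<times> 'a) set \<Rightarrow> ('a \<times> 'a) set" where
  "loc_add R S A B = {z. \<exists>p \<in> A. \<exists>q \<in> B. z \<in>
      frac R S (fst p \<otimes>\<^bsub>R\<^esub> snd q \<oplus>\<^bsub>R\<^esub> fst q \<otimes>\<^bsub>R\<^esub> snd p) (snd p \<otimes>\<^bsub>R\<^esub> snd q)}"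

definition localization :: "('a, 'b) ring_scheme \<Rightarrow> 'a set \<Rightarrow> ('a \<times> 'a) set ring" where
  "localization R S =
     \<lparr> carrier = (carrier R \<times> S) // loc_rel R S,
       mult = loc_mult R S,
       one = frac R S \<one>\<^bsub>R\<^esub> \<one>\<^bsub>R\<^esub>,
       zero = frac R S \<zero>\<^bsub>R\<^esub> \<one>\<^bsub>R\<^esub>,
       add = loc_add R S \<rparr>"

definition loc_ideal :: "('a, 'b) ring_scheme \<Rightarrow> 'a set \<Rightarrow> 'a set \<Rightarrow> ('a \<times> 'a) set set" where
  "loc_ideal R S J = {frac R S j s | j s. j \<in> J \<and> s \<in> S}"

end

theory Submission imports Defs begin

lemma (in ring) diff_zero_iff:
  assumes "a \<in> carrier R" "b \<in> carrier R"
  shows "a \<ominus> b = \<zero> \<longleftrightarrow> a = b"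
  using assms by (metis a_minus_def add.inv_closed minus_equality r_neg)

locale locS = cring R for R (structure) +
  fixes S assumes mc: "mult_closed R S"
begin

lemma S_sub: "S \<subseteq> carrier R" and one_S: "\<one> \<in> S"
  and S_mult: "a \<in> S \<Longrightarrow> b \<in> S \<Longrightarrow> a \<otimes> b \<in> S"
  using mc unfolding mult_closed_def by auto

lemma S_car: "s \<in> S \<Longrightarrow> s \<in> carrier R" using S_sub by auto

lemma rel_iff: "((r,s),(r',s')) \<in> loc_rel R S \<longleftrightarrow> r \<in> carrier R \<and> r' \<in> carrier R \<and> s \<in> S \<and> s' \<in> S
   \<and> (\<exists>t\<in>S. t \<otimes> r \<otimes> s' = t \<otimes> r' \<otimes> s)"
proof -
  have "t \<otimes> (r \<otimes> s' \<ominus> r' \<otimes> s) = \<zero> \<longleftrightarrow> t \<otimes> r \<otimes> s' = t \<otimes> r' \<otimes> s"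
    if "r \<in> carrier R" "r' \<in> carrier R" "s \<in> S" "s' \<in> S" "t \<in> S" for t
  proof -
    have "t \<otimes> (r \<otimes> s' \<ominus> r' \<otimes> s) = t \<otimes> r \<otimes> s' \<ominus> t \<otimes> r' \<otimes> s"
      using that S_car by algebra
    thus ?thesis using that S_car diff_zero_iff by auto
  qed
  thus ?thesis unfolding loc_rel_def by auto
qed

lemma equiv_rel: "equiv (carrier R \<times> S) (loc_rel R S)"
proof (rule equivI)
  show "loc_rel R S \<subseteq> (carrier R \<times> S) \<times> carrier R \<times> S" by (auto simp: loc_rel_def)
  show "refl_on (carrier R \<times> S) (loc_rel R S)"
    unfolding refl_on_def using rel_iff one_S by (auto simp: loc_rel_def)
  show "sym (loc_rel R S)"
    unfolding sym_def by (force simp: split_paired_all rel_iff)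
  show "trans (loc_rel R S)"
  proof (rule transI)
    fix x y z assume xy: "(x,y) \<in> loc_rel R S" and yz: "(y,z) \<in> loc_rel R S"
    obtain r s r' s' r'' s'' where e: "x = (r,s)" "y = (r',s')" "z = (r'',s'')"
      by (metis prod.exhaust)
    from xy yz obtain t u where c: "r \<in> carrier R" "r' \<in> carrier R" "r'' \<in> carrier R"
      "s \<in> S" "s' \<in> S" "s'' \<in> S" "t \<in> S" "u \<in> S"
      and h1: "t \<otimes> r \<otimes> s' = t \<otimes> r' \<otimes> s" and h2: "u \<otimes> r' \<otimes> s'' = u \<otimes> r'' \<otimes> s'"
      unfolding e rel_iff by blast
    have cc: "s \<in> carrier R" "s' \<in> carrier R" "s'' \<in> carrier R" "t \<in> carrier R" "u \<in> carrier R"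
      using c S_car by auto
    have "(t \<otimes> u \<otimes> s') \<otimes> r \<otimes> s'' = (t \<otimes> r \<otimes> s') \<otimes> (u \<otimes> s'')"
      using c cc by algebra
    also have "\<dots> = (u \<otimes> r' \<otimes> s'') \<otimes> (t \<otimes> s)" unfolding h1 using c cc by algebra
    also have "\<dots> = (u \<otimes> r'' \<otimes> s') \<otimes> (t \<otimes> s)" unfolding h2 ..
    also have "\<dots> = (t \<otimes> u \<otimes> s') \<otimes> r'' \<otimes> s" using c cc by algebra
    finally show "(x,z) \<in> loc_rel R S" unfolding e rel_iff using c S_mult by blast
  qed
qed

lemma frac_eq_iff: "r \<in> carrier R \<Longrightarrow> s \<in> S \<Longrightarrow> r' \<in> carrier R \<Longrightarrow> s' \<in> S \<Longrightarrow>
  frac R S r s = frac R S r' s' \<longleftrightarrow> (\<exists>t\<in>S. t \<otimes> r \<otimes> s' = t \<otimes> r' \<otimes> s)"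
  unfolding frac_def using equiv_class_eq_iff[OF equiv_rel, of "(r,s)" "(r',s')"] rel_iff
  by auto

lemma frac_eqI: "r \<in> carrier R \<Longrightarrow> s \<in> S \<Longrightarrow> r' \<in> carrier R \<Longrightarrow> s' \<in> S \<Longrightarrow>
  r \<otimes> s' = r' \<otimes> s \<Longrightarrow> frac R S r s = frac R S r' s'"
  using frac_eq_iff[of r s r' s'] one_S S_car by (auto simp: m_assoc)

lemma mem_frac: "p \<in> frac R S r s \<longleftrightarrow> ((r,s),p) \<in> loc_rel R S"
  unfolding frac_def by auto

lemma mem_frac_eq: assumes "p \<in> frac R S r s" shows "frac R S (fst p) (snd p) = frac R S r s"
  "fst p \<in> carrier R" "snd p \<in> S" "r \<in> carrier R" "s \<in> S"
proof -
  have "((r,s),(fst p, snd p)) \<in> loc_rel R S" using assms mem_frac by auto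
  then show "frac R S (fst p) (snd p) = frac R S r s"
    unfolding frac_def using equiv_class_eq[OF equiv_rel] sym_def equiv_rel
    by (metis equiv_class_eq_iff)
  show "fst p \<in> carrier R" "snd p \<in> S" "r \<in> carrier R" "s \<in> S" 
    using \<open>((r,s),(fst p, snd p)) \<in> loc_rel R S\<close> rel_iff[of r s "fst p" "snd p"] by auto
qed

lemma self_frac: "r \<in> carrier R \<Longrightarrow> s \<in> S \<Longrightarrow> (r,s) \<in> frac R S r s"
  using equiv_rel unfolding frac_def equiv_def refl_on_def by auto

lemma carrier_L: "carrier (localization R S) = {frac R S r s | r s. r \<in> carrier R \<and> s \<in> S}"
  unfolding localization_def quotient_def frac_def by auto

lemma mult_compat:
  assumes "frac R S r s = frac R S r' s'" "r \<in> carrier R" "s \<in> S" "r' \<in> carrier R" "s' \<in> S"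
    "b \<in> carrier R" "u \<in> S"
  shows "frac R S (r \<otimes> b) (s \<otimes> u) = frac R S (r' \<otimes> b) (s' \<otimes> u)"
proof -
  obtain t where t: "t \<in> S" "t \<otimes> r \<otimes> s' = t \<otimes> r' \<otimes> s" using assms frac_eq_iff by blast
  have cc: "s \<in> carrier R" "s' \<in> carrier R" "u \<in> carrier R" "t \<in> carrier R" using assms t S_car by auto
  have "t \<otimes> (r \<otimes> b) \<otimes> (s' \<otimes> u) = (t \<otimes> r \<otimes> s') \<otimes> (b \<otimes> u)" using assms cc by algebra
  also have "\<dots> = t \<otimes> (r' \<otimes> b) \<otimes> (s \<otimes> u)" unfolding t(2) using assms cc by algebra
  finally show ?thesis using frac_eq_iff assms t S_mult by auto
qed

lemma add_compat:
  assumes "frac R S r s = frac R S r' s'" "r \<in> carrier R" "s \<in> S" "r' \<in> carrier R" "s' \<in> S"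
    "b \<in> carrier R" "u \<in> S"
  shows "frac R S (r \<otimes> u \<oplus> b \<otimes> s) (s \<otimes> u) = frac R S (r' \<otimes> u \<oplus> b \<otimes> s') (s' \<otimes> u)"
proof -
  obtain t where t: "t \<in> S" "t \<otimes> r \<otimes> s' = t \<otimes> r' \<otimes> s" using assms frac_eq_iff by blast
  have cc: "s \<in> carrier R" "s' \<in> carrier R" "u \<in> carrier R" "t \<in> carrier R" using assms t S_car by auto
  have "t \<otimes> (r \<otimes> u \<oplus> b \<otimes> s) \<otimes> (s' \<otimes> u) = (t \<otimes> r \<otimes> s') \<otimes> (u \<otimes> u) \<oplus> t \<otimes> b \<otimes> s \<otimes> s' \<otimes> u"
    using assms cc by algebra
  also have "\<dots> = t \<otimes> (r' \<otimes> u \<oplus> b \<otimes> s') \<otimes> (s \<otimes> u)" unfolding t(2) using assms cc by algebra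
  finally have e: "t \<otimes> (r \<otimes> u \<oplus> b \<otimes> s) \<otimes> (s' \<otimes> u) = t \<otimes> (r' \<otimes> u \<oplus> b \<otimes> s') \<otimes> (s \<otimes> u)" .
  have c1: "r \<otimes> u \<oplus> b \<otimes> s \<in> carrier R" "r' \<otimes> u \<oplus> b \<otimes> s' \<in> carrier R" using assms cc by auto
  have "\<exists>t\<in>S. t \<otimes> (r \<otimes> u \<oplus> b \<otimes> s) \<otimes> (s' \<otimes> u) = t \<otimes> (r' \<otimes> u \<oplus> b \<otimes> s') \<otimes> (s \<otimes> u)"
    using e t(1) by blast
  thus ?thesis using frac_eq_iff[OF c1(1) S_mult[OF assms(3,7)] c1(2) S_mult[OF assms(5,7)]] by simp
qed


lemma frac_arg_eq: "x = y \<Longrightarrow> v = w \<Longrightarrow> frac R S x v = frac R S y w" by simp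

lemma mult_frac:
  assumes "a \<in> carrier R" "s \<in> S" "b \<in> carrier R" "u \<in> S"
  shows "loc_mult R S (frac R S a s) (frac R S b u) = frac R S (a \<otimes> b) (s \<otimes> u)"
proof -
  have key: "frac R S (fst p \<otimes> fst q) (snd p \<otimes> snd q) = frac R S (a \<otimes> b) (s \<otimes> u)"
    if p: "p \<in> frac R S a s" and q: "q \<in> frac R S b u" for p q
  proof -
    note P = mem_frac_eq[OF p] and Q = mem_frac_eq[OF q]
    have sc: "snd p \<in> carrier R" "snd q \<in> carrier R" "s \<in> carrier R" "u \<in> carrier R"
      using P Q S_car by auto
    have "frac R S (fst p \<otimes> fst q) (snd p \<otimes> snd q) = frac R S (a \<otimes> fst q) (s \<otimes> snd q)"
      using mult_compat[OF P(1) P(2,3,4,5) Q(2,3)] .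
    also have "\<dots> = frac R S (fst q \<otimes> a) (snd q \<otimes> s)"
      using P Q sc by (simp add: m_comm)
    also have "\<dots> = frac R S (b \<otimes> a) (u \<otimes> s)"
      using mult_compat[OF Q(1) Q(2,3,4,5) P(4,5)] .
    also have "\<dots> = frac R S (a \<otimes> b) (s \<otimes> u)"
      using assms sc by (simp add: m_comm)
    finally show ?thesis .
  qed
  show ?thesis
  proof (intro equalityI subsetI)
      fix z assume "z \<in> loc_mult R S (frac R S a s) (frac R S b u)"
      then obtain p q where "p \<in> frac R S a s" "q \<in> frac R S b u"
        "z \<in> frac R S (fst p \<otimes> fst q) (snd p \<otimes> snd q)" unfolding loc_mult_def by blast
      thus "z \<in> frac R S (a \<otimes> b) (s \<otimes> u)" using key by metis
    next
      fix z assume "z \<in> frac R S (a \<otimes> b) (s \<otimes> u)"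
      thus "z \<in> loc_mult R S (frac R S a s) (frac R S b u)"
        unfolding loc_mult_def using self_frac[OF assms(1,2)] self_frac[OF assms(3,4)] by force
  qed
qed

lemma add_frac:
  assumes "a \<in> carrier R" "s \<in> S" "b \<in> carrier R" "u \<in> S"
  shows "loc_add R S (frac R S a s) (frac R S b u) = frac R S (a \<otimes> u \<oplus> b \<otimes> s) (s \<otimes> u)"
proof -
  have key: "frac R S (fst p \<otimes> snd q \<oplus> fst q \<otimes> snd p) (snd p \<otimes> snd q) = frac R S (a \<otimes> u \<oplus> b \<otimes> s) (s \<otimes> u)"
    if p: "p \<in> frac R S a s" and q: "q \<in> frac R S b u" for p q
  proof -
    note P = mem_frac_eq[OF p] and Q = mem_frac_eq[OF q]
    have sc: "snd p \<in> carrier R" "snd q \<in> carrier R" "s \<in> carrier R" "u \<in> carrier R"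
      using P Q S_car by auto
    have "frac R S (fst p \<otimes> snd q \<oplus> fst q \<otimes> snd p) (snd p \<otimes> snd q) = frac R S (a \<otimes> snd q \<oplus> fst q \<otimes> s) (s \<otimes> snd q)"
      using add_compat[OF P(1) P(2,3,4,5) Q(2,3)] .
    also have "\<dots> = frac R S (fst q \<otimes> s \<oplus> a \<otimes> snd q) (snd q \<otimes> s)"
      apply (rule frac_arg_eq) using P Q sc by algebra+
    also have "\<dots> = frac R S (b \<otimes> s \<oplus> a \<otimes> u) (u \<otimes> s)"
      using add_compat[OF Q(1) Q(2,3,4,5) P(4,5)] .
    also have "\<dots> = frac R S (a \<otimes> u \<oplus> b \<otimes> s) (s \<otimes> u)"
      apply (rule frac_arg_eq) using assms sc by algebra+
    finally show ?thesis .
  qed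
  show ?thesis
  proof (intro equalityI subsetI)
      fix z assume "z \<in> loc_add R S (frac R S a s) (frac R S b u)"
      then obtain p q where "p \<in> frac R S a s" "q \<in> frac R S b u"
        "z \<in> frac R S (fst p \<otimes> snd q \<oplus> fst q \<otimes> snd p) (snd p \<otimes> snd q)" unfolding loc_add_def by blast
      thus "z \<in> frac R S (a \<otimes> u \<oplus> b \<otimes> s) (s \<otimes> u)" using key by metis
    next
      fix z assume "z \<in> frac R S (a \<otimes> u \<oplus> b \<otimes> s) (s \<otimes> u)"
      thus "z \<in> loc_add R S (frac R S a s) (frac R S b u)"
        unfolding loc_add_def using self_frac[OF assms(1,2)] self_frac[OF assms(3,4)] by force
  qed
qed


lemma L_simps: "carrier (localization R S) = {frac R S r s | r s. r \<in> carrier R \<and> s \<in> S}"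
  "mult (localization R S) = loc_mult R S" "add (localization R S) = loc_add R S"
  "one (localization R S) = frac R S \<one> \<one>" "zero (localization R S) = frac R S \<zero> \<one>"
  using carrier_L by (auto simp: localization_def)

lemma L_cases: assumes "x \<in> carrier (localization R S)"
  obtains r s where "x = frac R S r s" "r \<in> carrier R" "s \<in> S"
  using assms L_simps(1) by auto

lemma frac_in_L: "r \<in> carrier R \<Longrightarrow> s \<in> S \<Longrightarrow> frac R S r s \<in> carrier (localization R S)"
  using L_simps(1) by auto

lemma L_cring: "cring (localization R S)"
proof (rule cringI)
  show "abelian_group (localization R S)"
  proof (rule abelian_groupI)
    fix x y assume "x \<in> carrier (localization R S)" "y \<in> carrier (localization R S)"
    then obtain a s b u where e: "x = frac R S a s" "a \<in> carrier R" "s \<in> S" "y = frac R S b u" "b \<in> carrier R" "u \<in> S"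
      by (metis L_cases)
    have c: "s \<in> carrier R" "u \<in> carrier R" using e S_car by auto
    show "x \<oplus>\<^bsub>localization R S\<^esub> y \<in> carrier (localization R S)"
      using e c by (simp add: L_simps(3) add_frac frac_in_L S_mult)
    show "x \<oplus>\<^bsub>localization R S\<^esub> y = y \<oplus>\<^bsub>localization R S\<^esub> x"
      unfolding e L_simps(3) using e c by (simp add: add_frac, intro frac_arg_eq; algebra)
  next
    show "\<zero>\<^bsub>localization R S\<^esub> \<in> carrier (localization R S)"
      unfolding L_simps(5) by (rule frac_in_L[OF zero_closed one_S])
  next
    fix x y z assume "x \<in> carrier (localization R S)" "y \<in> carrier (localization R S)" "z \<in> carrier (localization R S)"
    then obtain a s b u c v where e: "x = frac R S a s" "a \<in> carrier R" "s \<in> S" "y = frac R S b u" "b \<in> carrier R" "u \<in> S"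
      "z = frac R S c v" "c \<in> carrier R" "v \<in> S"
      by (metis L_cases)
    have cc: "s \<in> carrier R" "u \<in> carrier R" "v \<in> carrier R" using e S_car by auto
    show "x \<oplus>\<^bsub>localization R S\<^esub> y \<oplus>\<^bsub>localization R S\<^esub> z = x \<oplus>\<^bsub>localization R S\<^esub> (y \<oplus>\<^bsub>localization R S\<^esub> z)"
      unfolding e L_simps(3) using e cc by (simp add: add_frac S_mult, intro frac_arg_eq; algebra)
  next
    fix x assume "x \<in> carrier (localization R S)"
    then obtain a s where e: "x = frac R S a s" "a \<in> carrier R" "s \<in> S" by (metis L_cases)
    have c: "s \<in> carrier R" using e S_car by auto
    show "\<zero>\<^bsub>localization R S\<^esub> \<oplus>\<^bsub>localization R S\<^esub> x = x"
      unfolding e L_simps using e c one_S by (simp add: add_frac)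
    have "frac R S (\<ominus> a) s \<oplus>\<^bsub>localization R S\<^esub> x = \<zero>\<^bsub>localization R S\<^esub>"
      unfolding e L_simps using e c one_S by (simp add: add_frac S_mult, intro frac_eqI; (simp add: S_mult)?; algebra)
    thus "\<exists>y\<in>carrier (localization R S). y \<oplus>\<^bsub>localization R S\<^esub> x = \<zero>\<^bsub>localization R S\<^esub>"
      using frac_in_L e by (meson a_inv_closed)
  qed
next
  show "comm_monoid (localization R S)"
  proof (rule comm_monoidI)
    fix x y assume "x \<in> carrier (localization R S)" "y \<in> carrier (localization R S)"
    then obtain a s b u where e: "x = frac R S a s" "a \<in> carrier R" "s \<in> S" "y = frac R S b u" "b \<in> carrier R" "u \<in> S"
      by (metis L_cases)
    have c: "s \<in> carrier R" "u \<in> carrier R" using e S_car by auto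
    show "x \<otimes>\<^bsub>localization R S\<^esub> y \<in> carrier (localization R S)"
      using e c by (simp add: L_simps(2) mult_frac frac_in_L S_mult)
    show "x \<otimes>\<^bsub>localization R S\<^esub> y = y \<otimes>\<^bsub>localization R S\<^esub> x"
      unfolding e L_simps(2) using e c by (simp add: mult_frac, intro frac_arg_eq; algebra)
  next
    show "\<one>\<^bsub>localization R S\<^esub> \<in> carrier (localization R S)"
      unfolding L_simps(4) by (rule frac_in_L[OF one_closed one_S])
  next
    fix x y z assume "x \<in> carrier (localization R S)" "y \<in> carrier (localization R S)" "z \<in> carrier (localization R S)"
    then obtain a s b u c v where e: "x = frac R S a s" "a \<in> carrier R" "s \<in> S" "y = frac R S b u" "b \<in> carrier R" "u \<in> S"
      "z = frac R S c v" "c \<in> carrier R" "v \<in> S"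
      by (metis L_cases)
    have cc: "s \<in> carrier R" "u \<in> carrier R" "v \<in> carrier R" using e S_car by auto
    show "x \<otimes>\<^bsub>localization R S\<^esub> y \<otimes>\<^bsub>localization R S\<^esub> z = x \<otimes>\<^bsub>localization R S\<^esub> (y \<otimes>\<^bsub>localization R S\<^esub> z)"
      unfolding e L_simps(2) using e cc by (simp add: mult_frac S_mult, intro frac_arg_eq; algebra)
  next
    fix x assume "x \<in> carrier (localization R S)"
    then obtain a s where e: "x = frac R S a s" "a \<in> carrier R" "s \<in> S" by (metis L_cases)
    have c: "s \<in> carrier R" using e S_car by auto
    show "\<one>\<^bsub>localization R S\<^esub> \<otimes>\<^bsub>localization R S\<^esub> x = x"
      unfolding e L_simps using e c one_S by (simp add: mult_frac)
  qed
next
  fix x y z assume "x \<in> carrier (localization R S)" "y \<in> carrier (localization R S)" "z \<in> carrier (localization R S)"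
  then obtain a s b u c v where e: "x = frac R S a s" "a \<in> carrier R" "s \<in> S" "y = frac R S b u" "b \<in> carrier R" "u \<in> S"
    "z = frac R S c v" "c \<in> carrier R" "v \<in> S"
    by (metis L_cases)
  have cc: "s \<in> carrier R" "u \<in> carrier R" "v \<in> carrier R" using e S_car by auto
  show "(x \<oplus>\<^bsub>localization R S\<^esub> y) \<otimes>\<^bsub>localization R S\<^esub> z = x \<otimes>\<^bsub>localization R S\<^esub> z \<oplus>\<^bsub>localization R S\<^esub> y \<otimes>\<^bsub>localization R S\<^esub> z"
    unfolding e L_simps using e cc by (simp add: mult_frac add_frac S_mult, intro frac_eqI; (simp add: S_mult)?; algebra)
qed


lemma L_neg: assumes "r \<in> carrier R" "s \<in> S"
  shows "\<ominus>\<^bsub>localization R S\<^esub> frac R S r s = frac R S (\<ominus> r) s"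
proof -
  interpret L: cring "localization R S" by (rule L_cring)
  have c: "s \<in> carrier R" using assms S_car by auto
  have "frac R S (\<ominus> r) s \<oplus>\<^bsub>localization R S\<^esub> frac R S r s = \<zero>\<^bsub>localization R S\<^esub>"
    unfolding L_simps using assms c one_S by (simp add: add_frac S_mult, intro frac_eqI; (simp add: S_mult)?; algebra)
  thus ?thesis using L.minus_equality frac_in_L assms by (meson a_inv_closed)
qed

lemma zero_iff: assumes "r \<in> carrier R" "s \<in> S"
  shows "frac R S r s = \<zero>\<^bsub>localization R S\<^esub> \<longleftrightarrow> (\<exists>t\<in>S. t \<otimes> r = \<zero>)"
  unfolding L_simps using frac_eq_iff[OF assms zero_closed one_S] assms S_car by auto

lemma mem_ideal_iff: assumes "ideal J R" "r \<in> carrier R" "s \<in> S"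
  shows "frac R S r s \<in> loc_ideal R S J \<longleftrightarrow> (\<exists>t\<in>S. t \<otimes> r \<in> J)"
proof
  assume "frac R S r s \<in> loc_ideal R S J"
  then obtain j u where ju: "j \<in> J" "u \<in> S" "frac R S r s = frac R S j u" unfolding loc_ideal_def by auto
  have jc: "j \<in> carrier R" using ideal.Icarr[OF assms(1) ju(1)] .
  obtain t where t: "t \<in> S" "t \<otimes> r \<otimes> u = t \<otimes> j \<otimes> s" using frac_eq_iff[OF assms(2,3) jc ju(2)] ju(3) by blast
  have c: "t \<in> carrier R" "u \<in> carrier R" "s \<in> carrier R" using S_car t(1) ju(2) assms(3) by auto
  have "(t \<otimes> u) \<otimes> r = t \<otimes> r \<otimes> u" using c jc assms(2) by algebra
  also have "\<dots> = t \<otimes> j \<otimes> s" by (rule t(2))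
  also have "\<dots> = (t \<otimes> s) \<otimes> j" using c jc assms(2) by algebra
  finally have e: "(t \<otimes> u) \<otimes> r = (t \<otimes> s) \<otimes> j" .
  have "(t \<otimes> s) \<otimes> j \<in> J" using ideal.I_l_closed[OF assms(1) ju(1)] c by (simp only: m_closed)
  hence "(t \<otimes> u) \<otimes> r \<in> J" unfolding e .
  thus "\<exists>t\<in>S. t \<otimes> r \<in> J" using S_mult[OF t(1) ju(2)] by blast
next
  assume "\<exists>t\<in>S. t \<otimes> r \<in> J"
  then obtain t where t: "t \<in> S" "t \<otimes> r \<in> J" by auto
  have c: "t \<in> carrier R" "s \<in> carrier R" using t assms S_car by auto
  have "frac R S r s = frac R S (t \<otimes> r) (t \<otimes> s)"
    apply (rule frac_eqI) using assms c t S_mult by (simp_all, algebra)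
  moreover have "t \<otimes> s \<in> S" using S_mult[OF t(1) assms(3)] .
  ultimately show "frac R S r s \<in> loc_ideal R S J" unfolding loc_ideal_def using t(2) by blast
qed

lemma loc_ideal_ideal: assumes "ideal J R"
  shows "ideal (loc_ideal R S J) (localization R S)"
proof -
  interpret L: cring "localization R S" by (rule L_cring)
  have Jc: "\<And>j. j \<in> J \<Longrightarrow> j \<in> carrier R" using ideal.Icarr[OF assms] by simp
  have memI: "\<And>j u. j \<in> J \<Longrightarrow> u \<in> S \<Longrightarrow> frac R S j u \<in> loc_ideal R S J"
    unfolding loc_ideal_def by blast
  have mem: "\<And>x. x \<in> loc_ideal R S J \<Longrightarrow> \<exists>j u. x = frac R S j u \<and> j \<in> J \<and> u \<in> S"
    unfolding loc_ideal_def by simp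
  have sub: "loc_ideal R S J \<subseteq> carrier (localization R S)"
  proof
    fix x assume xJ: "x \<in> loc_ideal R S J"
    obtain j u where "x = frac R S j u" "j \<in> J" "u \<in> S" using mem[OF xJ] by blast
    thus "x \<in> carrier (localization R S)" using frac_in_L Jc by simp
  qed
  have lcl: "x \<otimes>\<^bsub>localization R S\<^esub> a \<in> loc_ideal R S J"
    if H: "a \<in> loc_ideal R S J" "x \<in> carrier (localization R S)" for a x
  proof -
    obtain j u where a: "a = frac R S j u" "j \<in> J" "u \<in> S" using mem[OF H(1)] by blast
    obtain r s where x: "x = frac R S r s" "r \<in> carrier R" "s \<in> S" using H(2) L_cases by metis
    have "r \<otimes> j \<in> J" using ideal.I_l_closed[OF assms a(2) x(2)] .
    moreover have "x \<otimes>\<^bsub>localization R S\<^esub> a = frac R S (r \<otimes> j) (s \<otimes> u)"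
      unfolding a(1) x(1) L_simps(2) by (rule mult_frac[OF x(2,3) Jc[OF a(2)] a(3)])
    ultimately show ?thesis using memI S_mult[OF x(3) a(3)] by simp
  qed
  show ?thesis
  proof (rule idealI)
    show "ring (localization R S)" by (rule L.ring_axioms)
    show "subgroup (loc_ideal R S J) (add_monoid (localization R S))"
    proof (rule L.add.subgroupI)
      show "loc_ideal R S J \<subseteq> carrier (localization R S)" by (rule sub)
      have "frac R S \<zero> \<one> \<in> loc_ideal R S J"
        by (rule memI[OF additive_subgroup.zero_closed[OF ideal.axioms(1)[OF assms]] one_S])
      thus "loc_ideal R S J \<noteq> {}" by blast
    next
      fix a assume aJ: "a \<in> loc_ideal R S J"
      obtain j u where a: "a = frac R S j u" "j \<in> J" "u \<in> S" using mem[OF aJ] by blast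
      have "\<ominus>\<^bsub>localization R S\<^esub> a = frac R S (\<ominus> j) u" unfolding a(1) by (rule L_neg[OF Jc[OF a(2)] a(3)])
      then show "\<ominus>\<^bsub>localization R S\<^esub> a \<in> loc_ideal R S J"
        using memI[OF additive_subgroup.a_inv_closed[OF ideal.axioms(1)[OF assms] a(2)] a(3)] by simp
    next
      fix a b assume ab: "a \<in> loc_ideal R S J" "b \<in> loc_ideal R S J"
      obtain j u where a: "a = frac R S j u" "j \<in> J" "u \<in> S" using mem[OF ab(1)] by blast
      obtain k v where b: "b = frac R S k v" "k \<in> J" "v \<in> S" using mem[OF ab(2)] by blast
      have "j \<otimes> v \<oplus> k \<otimes> u \<in> J"
        using additive_subgroup.a_closed[OF ideal.axioms(1)[OF assms]
          ideal.I_r_closed[OF assms a(2) S_car[OF b(3)]] ideal.I_r_closed[OF assms b(2) S_car[OF a(3)]]] .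
      moreover have "a \<oplus>\<^bsub>localization R S\<^esub> b = frac R S (j \<otimes> v \<oplus> k \<otimes> u) (u \<otimes> v)"
        unfolding a(1) b(1) using add_frac[OF Jc[OF a(2)] a(3) Jc[OF b(2)] b(3)] by (simp add: L_simps(3))
      ultimately show "a \<oplus>\<^bsub>localization R S\<^esub> b \<in> loc_ideal R S J"
        using memI S_mult[OF a(3) b(3)] by simp
    qed
  next
    fix a x assume ax: "a \<in> loc_ideal R S J" "x \<in> carrier (localization R S)"
    thus "x \<otimes>\<^bsub>localization R S\<^esub> a \<in> loc_ideal R S J" by (rule lcl)
    have "a \<otimes>\<^bsub>localization R S\<^esub> x = x \<otimes>\<^bsub>localization R S\<^esub> a"
      using L.m_comm sub ax by blast
    thus "a \<otimes>\<^bsub>localization R S\<^esub> x \<in> loc_ideal R S J" using lcl[OF ax] by simp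
  qed
qed

lemma finprod_frac:
  assumes "finite A" "\<And>i. i \<in> A \<Longrightarrow> r i \<in> carrier R" "\<And>i. i \<in> A \<Longrightarrow> s i \<in> S"
  shows "finprod (localization R S) (\<lambda>i. frac R S (r i) (s i)) A = frac R S (finprod R r A) (finprod R s A)
    \<and> finprod R s A \<in> S"
  using assms
proof (induction A rule: finite_induct)
  case empty
  interpret L: cring "localization R S" by (rule L_cring)
  show ?case using one_S by (simp add: L_simps)
next
  case (insert x F)
  interpret L: cring "localization R S" by (rule L_cring)
  have sc: "\<And>i. i \<in> insert x F \<Longrightarrow> s i \<in> carrier R" using insert.prems S_car by auto
  have IH: "finprod (localization R S) (\<lambda>i. frac R S (r i) (s i)) F = frac R S (finprod R r F) (finprod R s F)"
    "finprod R s F \<in> S" using insert by auto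
  have rF: "r \<in> F \<rightarrow> carrier R" "s \<in> F \<rightarrow> carrier R" "r x \<in> carrier R" "s x \<in> carrier R" "s x \<in> S"
    using insert.prems sc by auto
  have e1: "finprod R r (insert x F) = r x \<otimes> finprod R r F"
    by (rule finprod_insert[OF insert.hyps rF(1,3)])
  have e2: "finprod R s (insert x F) = s x \<otimes> finprod R s F"
    by (rule finprod_insert[OF insert.hyps rF(2,4)])
  have fL: "(\<lambda>i. frac R S (r i) (s i)) \<in> F \<rightarrow> carrier (localization R S)"
    using insert.prems frac_in_L by auto
  have "finprod (localization R S) (\<lambda>i. frac R S (r i) (s i)) (insert x F) =
    frac R S (r x) (s x) \<otimes>\<^bsub>localization R S\<^esub> finprod (localization R S) (\<lambda>i. frac R S (r i) (s i)) F"
    by (rule L.finprod_insert[OF insert.hyps fL frac_in_L[OF rF(3,5)]])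
  also have "\<dots> = frac R S (r x \<otimes> finprod R r F) (s x \<otimes> finprod R s F)"
    unfolding IH(1) L_simps(2) by (rule mult_frac[OF rF(3,5) finprod_closed[OF rF(1)] IH(2)])
  finally show ?case unfolding e1 e2 using S_mult[OF rF(5) IH(2)] by blast
qed

end

lemma (in comm_monoid) finprod_upd_in:
  assumes "finite A" "k \<in> A" "f \<in> A \<rightarrow> carrier G" "c \<in> carrier G"
  shows "finprod G (f(k := c \<otimes> f k)) A = c \<otimes> finprod G f A"
proof -
  have A: "A = insert k (A - {k})" using assms by auto
  have fc: "f k \<in> carrier G" using assms by auto
  have "finprod G (f(k := c \<otimes> f k)) A = (c \<otimes> f k) \<otimes> finprod G (f(k := c \<otimes> f k)) (A - {k})"
    using assms fc by (subst A, subst finprod_insert) auto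
  also have "finprod G (f(k := c \<otimes> f k)) (A - {k}) = finprod G f (A - {k})"
    using assms by (intro finprod_cong') auto
  also have "(c \<otimes> f k) \<otimes> finprod G f (A - {k}) = c \<otimes> (f k \<otimes> finprod G f (A - {k}))"
    by (rule m_assoc) (use assms fc in \<open>auto intro!: finprod_closed\<close>)
  also have "f k \<otimes> finprod G f (A - {k}) = finprod G f A"
    using assms fc by (subst (2) A, subst finprod_insert) auto
  finally show ?thesis .
qed

lemma (in comm_monoid) finprod_upd_out:
  assumes "k \<notin> A" "f \<in> A \<rightarrow> carrier G"
  shows "finprod G (f(k := x)) A = finprod G f A"
  using assms by (intro finprod_cong') auto


lemma (in locS) part3:
  assumes w: "weakly_n_absorbing R n J" and dis: "J \<inter> S = {}"
  shows "weakly_n_absorbing (localization R S) n (loc_ideal R S J)"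
proof -
  interpret L: cring "localization R S" by (rule L_cring)
  have id: "ideal J R" and W: "\<forall>a\<in>{..n} \<rightarrow> carrier R. finprod R a {..n} \<noteq> \<zero> \<and> finprod R a {..n} \<in> J
      \<longrightarrow> (\<exists>i\<le>n. finprod R a ({..n} - {i}) \<in> J)"
    using w unfolding weakly_n_absorbing_def by auto
  have notJ: "\<And>t. t \<in> S \<Longrightarrow> t \<notin> J" using dis by auto
  have I: "ideal (loc_ideal R S J) (localization R S)" by (rule loc_ideal_ideal[OF id])
  have P: "loc_ideal R S J \<noteq> carrier (localization R S)"
  proof
    assume eq: "loc_ideal R S J = carrier (localization R S)"
    have "frac R S \<one> \<one> \<in> loc_ideal R S J" unfolding eq by (rule frac_in_L[OF one_closed one_S])
    then obtain t where t: "t \<in> S" "t \<otimes> \<one> \<in> J" using mem_ideal_iff[OF id one_closed one_S] by blast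
    have "t \<otimes> \<one> = t" using S_car[OF t(1)] by simp
    thus False using notJ[OF t(1)] t(2) by simp
  qed
  have M: "\<forall>a\<in>{..n} \<rightarrow> carrier (localization R S).
     finprod (localization R S) a {..n} \<noteq> \<zero>\<^bsub>localization R S\<^esub> \<and> finprod (localization R S) a {..n} \<in> loc_ideal R S J
      \<longrightarrow> (\<exists>i\<le>n. finprod (localization R S) a ({..n} - {i}) \<in> loc_ideal R S J)"
  proof (intro ballI impI)
    fix a assume a: "a \<in> {..n} \<rightarrow> carrier (localization R S)"
      and h: "finprod (localization R S) a {..n} \<noteq> \<zero>\<^bsub>localization R S\<^esub> \<and> finprod (localization R S) a {..n} \<in> loc_ideal R S J"
    have "\<forall>i. \<exists>p. i \<le> n \<longrightarrow> a i = frac R S (fst p) (snd p) \<and> fst p \<in> carrier R \<and> snd p \<in> S"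
    proof
      fix i show "\<exists>p. i \<le> n \<longrightarrow> a i = frac R S (fst p) (snd p) \<and> fst p \<in> carrier R \<and> snd p \<in> S"
      proof (cases "i \<le> n")
        case True
        then have "a i \<in> carrier (localization R S)" using a by auto
        then obtain r s where "a i = frac R S r s" "r \<in> carrier R" "s \<in> S" by (rule L_cases)
        thus ?thesis by (intro exI[of _ "(r,s)"]) simp
      qed simp
    qed
    then obtain p where p: "\<And>i. i \<le> n \<Longrightarrow> a i = frac R S (fst (p i)) (snd (p i)) \<and> fst (p i) \<in> carrier R \<and> snd (p i) \<in> S"
      by metis
    define r where "r = (\<lambda>i. fst (p i))"
    define s where "s = (\<lambda>i. snd (p i))"
    have rs: "\<And>i. i \<le> n \<Longrightarrow> a i = frac R S (r i) (s i)" "\<And>i. i \<le> n \<Longrightarrow> r i \<in> carrier R"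
      "\<And>i. i \<le> n \<Longrightarrow> s i \<in> S" using p unfolding r_def s_def by auto
    have fp: "finprod (localization R S) a B = frac R S (finprod R r B) (finprod R s B) \<and> finprod R s B \<in> S"
      if B: "B \<subseteq> {..n}" for B
    proof -
      have fin: "finite B" using B finite_subset by blast
      have "finprod (localization R S) a B = finprod (localization R S) (\<lambda>i. frac R S (r i) (s i)) B"
        by (rule L.finprod_cong') (use B rs frac_in_L in auto)
      moreover have "finprod (localization R S) (\<lambda>i. frac R S (r i) (s i)) B = frac R S (finprod R r B) (finprod R s B) \<and> finprod R s B \<in> S"
        by (rule finprod_frac[OF fin]) (use B rs in auto)
      ultimately show ?thesis by simp
    qed
    have rP: "r \<in> {..n} \<rightarrow> carrier R" using rs by auto
    note F = fp[of "{..n}", simplified]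
    have Pc: "finprod R r {..n} \<in> carrier R" using finprod_closed[OF rP] .
    have "frac R S (finprod R r {..n}) (finprod R s {..n}) \<in> loc_ideal R S J" using h F by simp
    then obtain t where t: "t \<in> S" "t \<otimes> finprod R r {..n} \<in> J"
      using mem_ideal_iff[OF id Pc conjunct2[OF F]] by blast
    have tc: "t \<in> carrier R" using S_car[OF t(1)] .
    have nz: "t \<otimes> finprod R r {..n} \<noteq> \<zero>"
    proof
      assume "t \<otimes> finprod R r {..n} = \<zero>"
      then have "frac R S (finprod R r {..n}) (finprod R s {..n}) = \<zero>\<^bsub>localization R S\<^esub>"
        using zero_iff[OF Pc conjunct2[OF F]] t(1) by blast
      thus False using h F by simp
    qed
    define b where "b = r(0 := t \<otimes> r 0)"
    have r0: "r 0 \<in> carrier R" using rs by simp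
    have bP: "b \<in> {..n} \<rightarrow> carrier R" using rP tc r0 unfolding b_def by auto
    have fb: "finprod R b {..n} = t \<otimes> finprod R r {..n}"
      unfolding b_def by (rule finprod_upd_in[OF finite_atMost _ rP tc]) simp
    obtain i where i: "i \<le> n" "finprod R b ({..n} - {i}) \<in> J"
      using W bP fb t(2) nz by metis
    have rPi: "r \<in> {..n} - {i} \<rightarrow> carrier R" using rP by auto
    have "\<exists>t'\<in>S. t' \<otimes> finprod R r ({..n} - {i}) \<in> J"
    proof (cases "i = 0")
      case True
      have "finprod R b ({..n} - {i}) = finprod R r ({..n} - {i})"
        unfolding b_def using True by (intro finprod_upd_out rPi) simp
      moreover have "\<one> \<otimes> finprod R r ({..n} - {i}) = finprod R r ({..n} - {i})"
        using finprod_closed[OF rPi] by simp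
      ultimately show ?thesis using i(2) one_S by metis
    next
      case False
      have "finprod R b ({..n} - {i}) = t \<otimes> finprod R r ({..n} - {i})"
        unfolding b_def using False by (intro finprod_upd_in[OF _ _ rPi tc]) auto
      thus ?thesis using i(2) t(1) by metis
    qed
    moreover have "finprod (localization R S) a ({..n} - {i}) = frac R S (finprod R r ({..n} - {i})) (finprod R s ({..n} - {i}))"
      "finprod R s ({..n} - {i}) \<in> S"
      using fp[of "{..n} - {i}"] by auto
    ultimately have "finprod (localization R S) a ({..n} - {i}) \<in> loc_ideal R S J"
      using mem_ideal_iff[OF id finprod_closed[OF rPi]] by simp
    thus "\<exists>i\<le>n. finprod (localization R S) a ({..n} - {i}) \<in> loc_ideal R S J" using i(1) by blast
  qed
  show ?thesis unfolding weakly_n_absorbing_def using I P M by blast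
qed


lemma part1:
  assumes cr: "cring R" and w: "weakly_n_absorbing R n J" and II: "ideal I R" and IJ: "I \<subseteq> J"
  shows "weakly_n_absorbing (R Quot I) n ((\<lambda>x. I +>\<^bsub>R\<^esub> x) ` J)"
proof -
  interpret R: cring R by (rule cr)
  interpret I: ideal I R by (rule II)
  interpret Q: cring "R Quot I" by (rule I.quotient_is_cring[OF cr])
  interpret H: ring_hom_cring R "R Quot I" "(+>\<^bsub>R\<^esub>) I" by (rule I.rcos_ring_hom_cring[OF cr])
  have id: "ideal J R" and ne: "J \<noteq> carrier R" and W: "\<forall>a\<in>{..n} \<rightarrow> carrier R. finprod R a {..n} \<noteq> \<zero>\<^bsub>R\<^esub> \<and> finprod R a {..n} \<in> J
      \<longrightarrow> (\<exists>i\<le>n. finprod R a ({..n} - {i}) \<in> J)"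
    using w unfolding weakly_n_absorbing_def by auto
  interpret J: ideal J R by (rule id)
  have carQ: "carrier (R Quot I) = (+>\<^bsub>R\<^esub>) I ` carrier R"
    unfolding FactRing_def A_RCOSETS_def' by auto
  have zQ: "\<zero>\<^bsub>R Quot I\<^esub> = I" unfolding FactRing_def by simp
  have mem: "x \<in> J" if x: "x \<in> carrier R" "I +>\<^bsub>R\<^esub> x \<in> (\<lambda>x. I +>\<^bsub>R\<^esub> x) ` J" for x
  proof -
    obtain j where j: "j \<in> J" "I +>\<^bsub>R\<^esub> x = I +>\<^bsub>R\<^esub> j" using x(2) by auto
    have "x \<in> I +>\<^bsub>R\<^esub> x" by (rule I.a_rcos_self[OF x(1)])
    then have "x \<in> I +>\<^bsub>R\<^esub> j" unfolding j(2) .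
    then have "x \<in> (\<Union>h\<in>I. {h \<oplus>\<^bsub>R\<^esub> j})" unfolding a_r_coset_def' .
    then obtain h where h: "h \<in> I" "x = h \<oplus>\<^bsub>R\<^esub> j" by auto
    have "h \<in> J" using h(1) IJ by auto
    thus "x \<in> J" using J.a_closed[OF _ j(1)] h(2) by simp
  qed
  have Iid: "ideal ((\<lambda>x. I +>\<^bsub>R\<^esub> x) ` J) (R Quot I)"
    using R.ring_ideal_imp_quot_ideal[OF II id] by simp
  have P: "(\<lambda>x. I +>\<^bsub>R\<^esub> x) ` J \<noteq> carrier (R Quot I)"
  proof
    assume eq: "(\<lambda>x. I +>\<^bsub>R\<^esub> x) ` J = carrier (R Quot I)"
    have c1: "I +>\<^bsub>R\<^esub> \<one>\<^bsub>R\<^esub> \<in> carrier (R Quot I)" by (rule H.hom_closed[OF R.one_closed])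
    have "I +>\<^bsub>R\<^esub> \<one>\<^bsub>R\<^esub> \<in> (\<lambda>x. I +>\<^bsub>R\<^esub> x) ` J" unfolding eq by (rule c1)
    then have "\<one>\<^bsub>R\<^esub> \<in> J" by (rule mem[OF R.one_closed])
    then show False using J.one_imp_carrier ne by simp
  qed
  have M: "\<forall>a\<in>{..n} \<rightarrow> carrier (R Quot I).
     finprod (R Quot I) a {..n} \<noteq> \<zero>\<^bsub>R Quot I\<^esub> \<and> finprod (R Quot I) a {..n} \<in> (\<lambda>x. I +>\<^bsub>R\<^esub> x) ` J
      \<longrightarrow> (\<exists>i\<le>n. finprod (R Quot I) a ({..n} - {i}) \<in> (\<lambda>x. I +>\<^bsub>R\<^esub> x) ` J)"
  proof (intro ballI impI)
    fix a assume a: "a \<in> {..n} \<rightarrow> carrier (R Quot I)"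
      and h: "finprod (R Quot I) a {..n} \<noteq> \<zero>\<^bsub>R Quot I\<^esub> \<and> finprod (R Quot I) a {..n} \<in> (\<lambda>x. I +>\<^bsub>R\<^esub> x) ` J"
    have "\<forall>i. \<exists>x. i \<le> n \<longrightarrow> a i = I +>\<^bsub>R\<^esub> x \<and> x \<in> carrier R"
    proof
      fix i show "\<exists>x. i \<le> n \<longrightarrow> a i = I +>\<^bsub>R\<^esub> x \<and> x \<in> carrier R"
      proof (cases "i \<le> n")
        case True
        then have "a i \<in> carrier (R Quot I)" using a by auto
        then show ?thesis unfolding carQ by auto
      qed simp
    qed
    then obtain r where rs: "\<And>i. i \<le> n \<Longrightarrow> a i = I +>\<^bsub>R\<^esub> r i \<and> r i \<in> carrier R"
      by metis
    have rP: "r \<in> {..n} \<rightarrow> carrier R" using rs by auto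
    have fp: "finprod (R Quot I) a B = I +>\<^bsub>R\<^esub> finprod R r B" if B: "B \<subseteq> {..n}" for B
    proof -
      have rB: "r \<in> B \<rightarrow> carrier R" using rP B by auto
      have "finprod (R Quot I) a B = finprod (R Quot I) ((+>\<^bsub>R\<^esub>) I \<circ> r) B"
        by (rule Q.finprod_cong') (use B rs in auto)
      also have "\<dots> = I +>\<^bsub>R\<^esub> finprod R r B" using H.hom_finprod[OF rB] by (simp add: comp_def)
      finally show ?thesis .
    qed
    have Pc: "finprod R r {..n} \<in> carrier R" using R.finprod_closed[OF rP] .
    have F: "finprod (R Quot I) a {..n} = I +>\<^bsub>R\<^esub> finprod R r {..n}" using fp by simp
    have inJ: "finprod R r {..n} \<in> J" using mem[OF Pc] h F by simp
    have nz: "finprod R r {..n} \<noteq> \<zero>\<^bsub>R\<^esub>"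
    proof
      assume "finprod R r {..n} = \<zero>\<^bsub>R\<^esub>"
      then have "finprod (R Quot I) a {..n} = \<zero>\<^bsub>R Quot I\<^esub>" using F H.hom_zero by simp
      thus False using h by simp
    qed
    obtain i where i: "i \<le> n" "finprod R r ({..n} - {i}) \<in> J" using W rP inJ nz by metis
    have "finprod (R Quot I) a ({..n} - {i}) \<in> (\<lambda>x. I +>\<^bsub>R\<^esub> x) ` J"
      using fp[of "{..n} - {i}"] i(2) by auto
    thus "\<exists>i\<le>n. finprod (R Quot I) a ({..n} - {i}) \<in> (\<lambda>x. I +>\<^bsub>R\<^esub> x) ` J" using i(1) by blast
  qed
  show ?thesis unfolding weakly_n_absorbing_def using Iid P M by blast
qed

lemma part2:
  assumes cr: "cring R" and w: "weakly_n_absorbing R n J" and T: "subring T R"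
  shows "weakly_n_absorbing (R\<lparr>carrier := T\<rparr>) n (J \<inter> T)"
proof -
  interpret R: cring R by (rule cr)
  have Tsub: "T \<subseteq> carrier R" using T by (rule subringE(1))
  interpret Tc: cring "R\<lparr>carrier := T\<rparr>"
    using R.subcring_iff[OF Tsub] R.subcringI'[OF T] by simp
  have hr: "ring_hom_ring (R\<lparr>carrier := T\<rparr>) R (\<lambda>x. x)"
    by (rule ring_hom_ringI) (use Tsub Tc.ring_axioms R.ring_axioms in auto)
  interpret H: ring_hom_cring "R\<lparr>carrier := T\<rparr>" R "\<lambda>x. x"
    by (rule ring_hom_cringI[OF Tc.cring_axioms cr ring_hom_ring.homh[OF hr]])
  have id: "ideal J R" and ne: "J \<noteq> carrier R" and W: "\<forall>a\<in>{..n} \<rightarrow> carrier R. finprod R a {..n} \<noteq> \<zero>\<^bsub>R\<^esub> \<and> finprod R a {..n} \<in> J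
      \<longrightarrow> (\<exists>i\<le>n. finprod R a ({..n} - {i}) \<in> J)"
    using w unfolding weakly_n_absorbing_def by auto
  interpret J: ideal J R by (rule id)
  have "ideal {r \<in> carrier (R\<lparr>carrier := T\<rparr>). r \<in> J} (R\<lparr>carrier := T\<rparr>)"
    using ring_hom_ring.ideal_vimage[OF hr id] by simp
  moreover have "{r \<in> carrier (R\<lparr>carrier := T\<rparr>). r \<in> J} = J \<inter> T" by auto
  ultimately have Iid: "ideal (J \<inter> T) (R\<lparr>carrier := T\<rparr>)" by simp
  have one: "\<one>\<^bsub>R\<^esub> \<in> T" using T by (rule subringE(3))
  have P: "J \<inter> T \<noteq> carrier (R\<lparr>carrier := T\<rparr>)"
  proof
    assume "J \<inter> T = carrier (R\<lparr>carrier := T\<rparr>)"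
    then have "\<one>\<^bsub>R\<^esub> \<in> J" using one by auto
    then show False using J.one_imp_carrier ne by simp
  qed
  have M: "\<forall>a\<in>{..n} \<rightarrow> carrier (R\<lparr>carrier := T\<rparr>).
     finprod (R\<lparr>carrier := T\<rparr>) a {..n} \<noteq> \<zero>\<^bsub>R\<lparr>carrier := T\<rparr>\<^esub> \<and> finprod (R\<lparr>carrier := T\<rparr>) a {..n} \<in> J \<inter> T
      \<longrightarrow> (\<exists>i\<le>n. finprod (R\<lparr>carrier := T\<rparr>) a ({..n} - {i}) \<in> J \<inter> T)"
  proof (intro ballI impI)
    fix a assume a: "a \<in> {..n} \<rightarrow> carrier (R\<lparr>carrier := T\<rparr>)"
      and h: "finprod (R\<lparr>carrier := T\<rparr>) a {..n} \<noteq> \<zero>\<^bsub>R\<lparr>carrier := T\<rparr>\<^esub> \<and> finprod (R\<lparr>carrier := T\<rparr>) a {..n} \<in> J \<inter> T"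
    have fp: "finprod (R\<lparr>carrier := T\<rparr>) a B = finprod R a B" if B: "B \<subseteq> {..n}" for B
    proof -
      have aB: "a \<in> B \<rightarrow> carrier (R\<lparr>carrier := T\<rparr>)" using a B by auto
      show ?thesis using H.hom_finprod[OF aB] by (simp add: comp_def)
    qed
    have aR: "a \<in> {..n} \<rightarrow> carrier R" using a Tsub by auto
    have "finprod R a {..n} \<noteq> \<zero>\<^bsub>R\<^esub>" "finprod R a {..n} \<in> J" using h fp[of "{..n}"] by auto
    then obtain i where i: "i \<le> n" "finprod R a ({..n} - {i}) \<in> J" using W aR by metis
    have "finprod (R\<lparr>carrier := T\<rparr>) a ({..n} - {i}) \<in> carrier (R\<lparr>carrier := T\<rparr>)"
      by (rule Tc.finprod_closed) (use a in auto)
    then have "finprod (R\<lparr>carrier := T\<rparr>) a ({..n} - {i}) \<in> T" by simp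
    then have "finprod (R\<lparr>carrier := T\<rparr>) a ({..n} - {i}) \<in> J \<inter> T"
      using fp[of "{..n} - {i}"] i(2) by auto
    thus "\<exists>i\<le>n. finprod (R\<lparr>carrier := T\<rparr>) a ({..n} - {i}) \<in> J \<inter> T" using i(1) by blast
  qed
  show ?thesis unfolding weakly_n_absorbing_def using Iid P M by blast
qed

theorem mainTheorem13:
  fixes R :: "('a, 'b) ring_scheme" and n :: nat and J :: "'a set"
  assumes "cring R" and "n > 0" and "weakly_n_absorbing R n J"
  shows "(\<forall>I. ideal I R \<and> I \<subseteq> J \<longrightarrow>
            weakly_n_absorbing (R Quot I) n ((\<lambda>x. I +>\<^bsub>R\<^esub> x) ` J))
       \<and> (\<forall>T. subring T R \<longrightarrow>
            weakly_n_absorbing (R\<lparr>carrier := T\<rparr>) n (J \<inter> T))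
       \<and> (\<forall>S. mult_closed R S \<and> J \<inter> S = {} \<longrightarrow>
            weakly_n_absorbing (localization R S) n (loc_ideal R S J))"
proof (intro conjI allI impI)
  fix I assume "ideal I R \<and> I \<subseteq> J"
  thus "weakly_n_absorbing (R Quot I) n ((\<lambda>x. I +>\<^bsub>R\<^esub> x) ` J)"
    using part1[OF assms(1) assms(3)] by blast
next
  fix T assume "subring T R"
  thus "weakly_n_absorbing (R\<lparr>carrier := T\<rparr>) n (J \<inter> T)"
    using part2[OF assms(1) assms(3)] by blast
next
  fix S assume S: "mult_closed R S \<and> J \<inter> S = {}"
  interpret locS R S using assms(1) S by (simp add: locS_def locS_axioms_def)
  show "weakly_n_absorbing (localization R S) n (loc_ideal R S J)"
    using part3[OF assms(3)] S by blast
qed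

end
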